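(* Let $E>0$... more precisely let $E\neq 0$ be real and set $\theta=2/E$. Let $H(\mathbf{x})=\frac12(x^2-t^2)$. Then for any (smooth, Schwartz) function $f$ on $\mathbb{R}^2$, $$\mathsf{D}^2 f=E^2\,H\star f\qquad\text{and}\qquad \tilde{\mathsf{D}}^2 f=E^2\, f\star H .$$
   Context: Coordinates on $\mathbb{R}^2$ are $\mathbf{x}=(x^0,x^1)=(t,x)$, Minkowski metric $\eta=\mathrm{diag}(1,-1)$, $\mathbf{k}\cdot\mathbf{x}=\eta_{\mu\nu}k^\mu x^\nu$, and $\epsilon_{\mu\nu}$ antisymmetric with $\epsilon_{01}=1$. With $E_{\mu\nu}=E\epsilon_{\mu\nu}$, $\mathsf{D}_\mu=\frac1{\sqrt2}(-i\partial_\mu+E_{\mu\nu}x^\nu)$, $\tilde{\mathsf{D}}_\mu=\frac1{\sqrt2}(-i\partial_\mu-E_{\mu\nu}x^\nu)$, $\mathsf{D}^2=\eta^{\mu\nu}\mathsf{D}_\mu\mathsf{D}_\nu$, $\tilde{\mathsf{D}}^2=\eta^{\mu\nu}\tilde{\mathsf{D}}_\mu\tilde{\mathsf{D}}_\nu$; explicitly $\mathsf{D}^2=\frac12\big[-(\partial_t^2-\partial_x^2)-2iE(x\partial_t+t\partial_x)-E^2(t^2-x^2)\big]$ and $\tilde{\mathsf{D}}^2$ is the same with $E\to-E$. The star product is $(f\star g)(\mathbf{x})=\frac1{(2\pi)^2}\int d\mathbf{k}\,d\mathbf{p}\,\mathcal{F}[f](\mathbf{k})\mathcal{F}[g](\mathbf{p})\,e^{\frac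 i2\theta\epsilon_{\mu\nu}k^\mu p^\nu}e^{i(\mathbf{k}+\mathbf{p})\cdot\mathbf{x}}$, where $\mathcal{F}[f](\mathbf{k})=\frac1{2\pi}\int d\mathbf{x}\,e^{-i\mathbf{k}\cdot\mathbf{x}}f(\mathbf{x})$ (extended in the usual way when one factor is the polynomial $H$). *)

theory Defs
  imports "HOL-Analysis.Analysis"
begin

(* Points of R^2 are pairs (t, x) = (x^0, x^1). Indices mu range over {0,1}. *)

definition coord :: "nat \<Rightarrow> real \<times> real \<Rightarrow> real" where
  "coord \<mu> p = (if \<mu> = 0 then fst p else snd p)"

definition basis_vec :: "nat \<Rightarrow> real \<times> real" where
  "basis_vec \<mu> = (if \<mu> = 0 then (1, 0) else (0, 1))"

(* Minkowski metric eta = diag(1,-1) (its inverse is itself) *)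
definition eta :: "nat \<Rightarrow> nat \<Rightarrow> real" where
  "eta \<mu> \<nu> = (if \<mu> = \<nu> then (if \<mu> = 0 then 1 else -1) else 0)"

definition eps :: "nat \<Rightarrow> nat \<Rightarrow> real" where
  "eps \<mu> \<nu> = (if \<mu> = 0 \<and> \<nu> = 1 then 1 else if \<mu> = 1 \<and> \<nu> = 0 then -1 else 0)"

definition mdot :: "real \<times> real \<Rightarrow> real \<times> real \<Rightarrow> real" where
  "mdot k x = (\<Sum>\<mu><2. \<Sum>\<nu><2. eta \<mu> \<nu> * coord \<mu> k * coord \<nu> x)"

definition pd :: "nat \<Rightarrow> (real \<times> real \<Rightarrow> complex) \<Rightarrow> real \<times> real \<Rightarrow> complex" where
  "pd \<mu> f p = vector_derivative (\<lambda>s. f (p + s *\<^sub>R basis_vec \<mu>)) (at 0)"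

fun dpow :: "nat list \<Rightarrow> (real \<times> real \<Rightarrow> complex) \<Rightarrow> real \<times> real \<Rightarrow> complex" where
  "dpow [] f = f"
| "dpow (\<mu> # ms) f = pd \<mu> (dpow ms f)"

definition schwartz :: "(real \<times> real \<Rightarrow> complex) \<Rightarrow> bool" where
  "schwartz f \<longleftrightarrow> (\<forall>ms. (\<forall>p. dpow ms f differentiable (at p)) \<and>
      (\<forall>a b :: nat. bounded (range (\<lambda>p. complex_of_real (fst p ^ a * snd p ^ b) * dpow ms f p))))"

definition Ex :: "real \<Rightarrow> nat \<Rightarrow> real \<times> real \<Rightarrow> real" where
  "Ex E \<mu> p = (\<Sum>\<nu><2. E * eps \<mu> \<nu> * coord \<nu> p)"

definition Dop :: "real \<Rightarrow> nat \<Rightarrow> (real \<times> real \<Rightarrow> complex) \<Rightarrow> real \<times> real \<Rightarrow> complex" where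
  "Dop E \<mu> f p = (1 / complex_of_real (sqrt 2)) * (- \<i> * pd \<mu> f p + complex_of_real (Ex E \<mu> p) * f p)"

definition Dtop :: "real \<Rightarrow> nat \<Rightarrow> (real \<times> real \<Rightarrow> complex) \<Rightarrow> real \<times> real \<Rightarrow> complex" where
  "Dtop E \<mu> f p = (1 / complex_of_real (sqrt 2)) * (- \<i> * pd \<mu> f p - complex_of_real (Ex E \<mu> p) * f p)"

definition Dsq :: "real \<Rightarrow> (real \<times> real \<Rightarrow> complex) \<Rightarrow> real \<times> real \<Rightarrow> complex" where
  "Dsq E f p = (\<Sum>\<mu><2. \<Sum>\<nu><2. complex_of_real (eta \<mu> \<nu>) * Dop E \<mu> (Dop E \<nu> f) p)"

definition Dtsq :: "real \<Rightarrow> (real \<times> real \<Rightarrow> complex) \<Rightarrow> real \<times> real \<Rightarrow> complex" where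
  "Dtsq E f p = (\<Sum>\<mu><2. \<Sum>\<nu><2. complex_of_real (eta \<mu> \<nu>) * Dtop E \<mu> (Dtop E \<nu> f) p)"

definition FT :: "(real \<times> real \<Rightarrow> complex) \<Rightarrow> real \<times> real \<Rightarrow> complex" where
  "FT f k = complex_of_real (1 / (2 * pi)) *
     (\<integral>x. exp (- \<i> * complex_of_real (mdot k x)) * f x \<partial>lborel)"

(* shift vector a(p)^rho = (theta/2) eta^{rho mu} eps_{mu nu} p^nu, so that
   e^{(i/2) theta eps_{mu nu} k^mu p^nu} = e^{i k . a(p)} *)
definition shiftv :: "real \<Rightarrow> real \<times> real \<Rightarrow> real \<times> real" where
  "shiftv \<theta> p = (\<theta> / 2 * (\<Sum>\<mu><2. \<Sum>\<nu><2. eta 0 \<mu> * eps \<mu> \<nu> * coord \<nu> p),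
                   \<theta> / 2 * (\<Sum>\<mu><2. \<Sum>\<nu><2. eta 1 \<mu> * eps \<mu> \<nu> * coord \<nu> p))"

(* Star product with a polynomial factor P, obtained from the defining formula
   by performing the k-integral against the (distributional) Fourier transform
   of the polynomial: int dk F[P](k) e^{i k.y} = 2 pi P(y). *)
definition star_poly_left :: "real \<Rightarrow> (real \<times> real \<Rightarrow> complex) \<Rightarrow> (real \<times> real \<Rightarrow> complex) \<Rightarrow> real \<times> real \<Rightarrow> complex" where
  "star_poly_left \<theta> P f x = complex_of_real (1 / (2 * pi)) *
     (\<integral>p. FT f p * P (x + shiftv \<theta> p) * exp (\<i> * complex_of_real (mdot p x)) \<partial>lborel)"

definition star_poly_right :: "real \<Rightarrow> (real \<times> real \<Rightarrow> complex) \<Rightarrow> (real \<times> real \<Rightarrow> complex) \<Rightarrow> real \<times> real \<Rightarrow> complex" where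
  "star_poly_right \<theta> f P x = complex_of_real (1 / (2 * pi)) *
     (\<integral>k. FT f k * P (x - shiftv \<theta> k) * exp (\<i> * complex_of_real (mdot k x)) \<partial>lborel)"

definition Hpoly :: "real \<times> real \<Rightarrow> complex" where
  "Hpoly p = complex_of_real ((snd p ^ 2 - fst p ^ 2) / 2)"

end

theory Submission
  imports Defs "HOL-Probability.Probability"
begin


lemma one_plus_sq_ne: "1 + (x::real) * x \<noteq> 0"
  by (smt (verit) zero_le_square)

lemma integrable_cauchy: "integrable lborel (\<lambda>x::real. 1 / (1 + x\<^sup>2))"
proof -
  have "set_integrable lborel (einterval (-\<infinity>) \<infinity>) (\<lambda>x::real. 1 / (1 + x\<^sup>2))"
  proof (rule interval_integral_FTC_nonneg(1)[where F=arctan and A="-(pi/2)" and B="pi/2"])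
    show "((arctan \<circ> real_of_ereal) \<longlongrightarrow> -(pi/2)) (at_right (-\<infinity>))"
      unfolding ereal_tendsto_simps1 by (rule tendsto_arctan_at_bot)
    show "((arctan \<circ> real_of_ereal) \<longlongrightarrow> pi/2) (at_left \<infinity>)"
      unfolding ereal_tendsto_simps1 by (rule tendsto_arctan_at_top)
  qed (auto intro!: derivative_eq_intros continuous_intros simp: power2_eq_square one_plus_sq_ne divide_inverse)
  then show ?thesis by (simp add: set_integrable_def)
qed

lemma gauss_int1:
  fixes a l :: real assumes l: "l \<noteq> 0"
  shows "integrable lborel (\<lambda>s. exp (\<i> * complex_of_real (a * s)) * complex_of_real (exp (- (l^2 * s^2) / 2)))"
    and "(\<integral>s. exp (\<i> * complex_of_real (a * s)) * complex_of_real (exp (- (l^2 * s^2) / 2)) \<partial>lborel)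
          = complex_of_real (sqrt (2*pi) / \<bar>l\<bar> * exp (- (a^2) / (2 * l^2)))"
proof -
  have c: "char std_normal_distribution t = complex_of_real (exp (- (t^2) / 2))" for t
    by (simp add: char_std_normal_distribution)
  have ii: "integrable lborel (\<lambda>x. std_normal_density x)"
    using integrable_std_normal_moment[of 0] by simp
  define F where "F x = exp (\<i> * complex_of_real ((a/l) * x)) * complex_of_real (exp (- (x^2) / 2))" for x
  have iF: "integrable lborel F"
  proof (rule Bochner_Integration.integrable_bound[where f="\<lambda>x. sqrt (2*pi) * std_normal_density x"])
    show "integrable lborel (\<lambda>x. sqrt (2*pi) * std_normal_density x)" using ii by simp
    show "F \<in> borel_measurable lborel" unfolding F_def by measurable
    show "AE x in lborel. norm (F x) \<le> norm (sqrt (2*pi) * std_normal_density x)"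
      by (auto simp: F_def norm_mult std_normal_density_def)
  qed
  have "char std_normal_distribution (a/l) = (\<integral>x. std_normal_density x *\<^sub>R iexp ((a/l) * x) \<partial>lborel)"
    unfolding char_def by (subst integral_density) (auto simp: normal_density_nonneg)
  also have "\<dots> = (\<integral>x. complex_of_real (1 / sqrt (2*pi)) * F x \<partial>lborel)"
    by (rule Bochner_Integration.integral_cong) (auto simp: F_def std_normal_density_def scaleR_conv_of_real mult_ac)
  also have "\<dots> = complex_of_real (1 / sqrt (2*pi)) * (\<integral>x. F x \<partial>lborel)" by simp
  finally have 1: "(\<integral>x. F x \<partial>lborel) = complex_of_real (sqrt (2*pi)) * complex_of_real (exp (- ((a/l)^2) / 2))"
    unfolding c by (simp add: field_simps)
  have eq: "F (0 + l * s) = exp (\<i> * complex_of_real (a * s)) * complex_of_real (exp (- (l^2 * s^2) / 2))" for s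
    using l by (simp add: F_def power_mult_distrib)
  show "integrable lborel (\<lambda>s. exp (\<i> * complex_of_real (a * s)) * complex_of_real (exp (- (l^2 * s^2) / 2)))"
    using lborel_integrable_real_affine[OF iF l, of 0] unfolding eq .
  have "(\<integral>x. F x \<partial>lborel) = \<bar>l\<bar> *\<^sub>R (\<integral>s. F (0 + l * s) \<partial>lborel)"
    by (rule lborel_integral_real_affine[OF l])
  then have "(\<integral>s. F (0 + l * s) \<partial>lborel) = (1/\<bar>l\<bar>) *\<^sub>R (\<integral>x. F x \<partial>lborel)" using l by simp
  then show "(\<integral>s. exp (\<i> * complex_of_real (a * s)) * complex_of_real (exp (- (l^2 * s^2) / 2)) \<partial>lborel)
          = complex_of_real (sqrt (2*pi) / \<bar>l\<bar> * exp (- (a^2) / (2 * l^2)))"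
    unfolding eq 1 using l by (simp add: scaleR_conv_of_real power_divide field_simps)
qed

lemma prod_integrable:
  fixes a :: "'a::euclidean_space \<Rightarrow> complex" and b :: "'b::euclidean_space \<Rightarrow> complex"
  assumes a: "integrable lborel a" and b: "integrable lborel b"
  shows "integrable lborel (\<lambda>p. a (fst p) * b (snd p))"
    and "(\<integral>p. a (fst p) * b (snd p) \<partial>lborel) = (\<integral>x. a x \<partial>lborel) * (\<integral>y. b y \<partial>lborel)"
proof -
  have am[measurable]: "a \<in> borel_measurable borel" using a by (simp add: borel_measurable_integrable)
  have bm[measurable]: "b \<in> borel_measurable borel" using b by (simp add: borel_measurable_integrable)
  have i: "integrable (lborel \<Otimes>\<^sub>M lborel) (\<lambda>p. a (fst p) * b (snd p))"
  proof (rule lborel_pair.Fubini_integrable)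
    show "(\<lambda>p. a (fst p) * b (snd p)) \<in> borel_measurable (lborel \<Otimes>\<^sub>M lborel)" by measurable
    have "(\<lambda>x. \<integral>y. norm (a (fst (x, y)) * b (snd (x, y))) \<partial>lborel) = (\<lambda>x. norm (a x) * (\<integral>y. norm (b y) \<partial>lborel))"
      by (simp add: norm_mult)
    then show "integrable lborel (\<lambda>x. \<integral>y. norm (a (fst (x, y)) * b (snd (x, y))) \<partial>lborel)"
      using a by (simp add: integrable_norm)
    show "AE x in lborel. integrable lborel (\<lambda>y. a (fst (x, y)) * b (snd (x, y)))"
      using b by simp
  qed
  then show "integrable lborel (\<lambda>p. a (fst p) * b (snd p))" by (simp add: lborel_prod)
  have "(\<integral>p. a (fst p) * b (snd p) \<partial>lborel) = (\<integral>p. a (fst p) * b (snd p) \<partial>(lborel \<Otimes>\<^sub>M lborel))"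
    by (simp add: lborel_prod)
  also have "\<dots> = (\<integral>x. (\<integral>y. a (fst (x,y)) * b (snd (x,y)) \<partial>lborel) \<partial>lborel)"
    using lborel_pair.integral_fst'[OF i] by simp
  also have "\<dots> = (\<integral>x. a x \<partial>lborel) * (\<integral>y. b y \<partial>lborel)" by simp
  finally show "(\<integral>p. a (fst p) * b (snd p) \<partial>lborel) = (\<integral>x. a x \<partial>lborel) * (\<integral>y. b y \<partial>lborel)" .
qed

lemma mdot_eq: "mdot k x = fst k * fst x - snd k * snd x"
  by (simp add: mdot_def eta_def coord_def numeral_2_eq_2)

lemma shiftv_eq: "shiftv \<theta> p = (\<theta>/2 * snd p, \<theta>/2 * fst p)"
  by (simp add: shiftv_def eta_def eps_def coord_def numeral_2_eq_2)

lemma dpow_append: "dpow ms (dpow ms' f) = dpow (ms @ ms') f"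
  by (induction ms) auto

lemma schwartz_pd: "schwartz f \<Longrightarrow> schwartz (pd \<mu> f)"
proof -
  have e: "dpow ms (pd \<mu> f) = dpow (ms @ [\<mu>]) f" for ms
    using dpow_append[of ms "[\<mu>]" f] by simp
  assume "schwartz f" then show ?thesis unfolding schwartz_def e by blast
qed

lemma schwartz_diff: "schwartz f \<Longrightarrow> dpow ms f differentiable (at p)"
  unfolding schwartz_def by blast

lemma schwartz_diff0: "schwartz f \<Longrightarrow> f differentiable (at p)"
  using schwartz_diff[of f "[]"] by simp

lemma schwartz_cont: "schwartz f \<Longrightarrow> continuous_on UNIV f"
  by (intro continuous_at_imp_continuous_on ballI differentiable_imp_continuous_within schwartz_diff0)

lemma schwartz_meas[measurable]: "schwartz f \<Longrightarrow> f \<in> borel_measurable borel"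
  using schwartz_cont borel_measurable_continuous_onI by blast

lemma pd_from_deriv:
  assumes "(g has_derivative D) (at p)"
  shows "pd \<mu> g p = D (basis_vec \<mu>)"
proof -
  have "((\<lambda>s. p + s *\<^sub>R basis_vec \<mu>) has_derivative (\<lambda>h. h *\<^sub>R basis_vec \<mu>)) (at 0)"
    by (auto intro!: derivative_eq_intros)
  from has_derivative_compose[OF this, of g D] assms
  have "((\<lambda>s. g (p + s *\<^sub>R basis_vec \<mu>)) has_derivative (\<lambda>h. D (h *\<^sub>R basis_vec \<mu>))) (at 0)"
    by simp
  then have "((\<lambda>s. g (p + s *\<^sub>R basis_vec \<mu>)) has_vector_derivative D (basis_vec \<mu>)) (at 0)"
  proof -
    have "(\<lambda>h. D (h *\<^sub>R basis_vec \<mu>)) = (\<lambda>h. h *\<^sub>R D (basis_vec \<mu>))"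
      using linear_cmul[OF has_derivative_linear[OF assms]] by auto
    with \<open>((\<lambda>s. g (p + s *\<^sub>R basis_vec \<mu>)) has_derivative (\<lambda>h. D (h *\<^sub>R basis_vec \<mu>))) (at 0)\<close>
    show ?thesis unfolding has_vector_derivative_def by simp
  qed
  then show ?thesis unfolding pd_def by (rule vector_derivative_at)
qed

definition w :: "real \<times> real \<Rightarrow> real" where
  "w p = 1 / (1 + (fst p)\<^sup>2) * (1 / (1 + (snd p)\<^sup>2))"

lemma w_pos: "w p > 0" unfolding w_def by (simp add: add_pos_nonneg)

lemma one_plus_sq_ne2: "1 + (x::real)\<^sup>2 \<noteq> 0"
  by (smt (verit) zero_le_power2)

lemma w_cont: "continuous_on UNIV w"
  unfolding w_def by (intro continuous_intros) (auto simp: one_plus_sq_ne2)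

lemma w_meas[measurable]: "w \<in> borel_measurable borel"
  using w_cont borel_measurable_continuous_onI by blast

lemma integrable_w_c: "integrable lborel (\<lambda>p. complex_of_real (w p))"
proof -
  have i: "integrable lborel (\<lambda>x::real. complex_of_real (1 / (1 + x\<^sup>2)))"
    using integrable_cauchy by (rule integrable_of_real)
  show ?thesis using prod_integrable(1)[OF i i] unfolding w_def by simp
qed

lemma integrable_w: "integrable lborel w"
  using integrable_Re[OF integrable_w_c] by simp

lemma schwartz_bound:
  assumes "schwartz f"
  shows "\<exists>C. \<forall>p. norm (dpow ms f p) \<le> C * w p"
proof -
  define h where "h = dpow ms f"
  have bd: "\<exists>B. \<forall>p. \<bar>fst p ^ a * snd p ^ b\<bar> * norm (h p) \<le> B" for a b
  proof -
    have "bounded (range (\<lambda>p. complex_of_real (fst p ^ a * snd p ^ b) * h p))"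
      using assms unfolding schwartz_def h_def by blast
    then obtain B where "\<forall>x\<in>range (\<lambda>p. complex_of_real (fst p ^ a * snd p ^ b) * h p). norm x \<le> B"
      unfolding bounded_iff by blast
    then have "\<forall>p. \<bar>fst p ^ a * snd p ^ b\<bar> * norm (h p) \<le> B"
      by (auto simp: norm_mult norm_power abs_mult power_abs)
    then show ?thesis by blast
  qed
  obtain B1 where B1: "\<And>p. \<bar>fst p ^ 0 * snd p ^ 0\<bar> * norm (h p) \<le> B1" using bd by blast
  obtain B2 where B2: "\<And>p. \<bar>fst p ^ 2 * snd p ^ 0\<bar> * norm (h p) \<le> B2" using bd by blast
  obtain B3 where B3: "\<And>p. \<bar>fst p ^ 0 * snd p ^ 2\<bar> * norm (h p) \<le> B3" using bd by blast
  obtain B4 where B4: "\<And>p. \<bar>fst p ^ 2 * snd p ^ 2\<bar> * norm (h p) \<le> B4" using bd by blast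
  have "norm (h p) \<le> (B1 + B2 + B3 + B4) * w p" for p
  proof -
    let ?x = "(fst p)\<^sup>2" and ?y = "(snd p)\<^sup>2" and ?n = "norm (h p)"
    have "?n * ((1 + ?x) * (1 + ?y)) = ?n + ?x * ?n + ?y * ?n + ?x * ?y * ?n"
      by (simp add: algebra_simps)
    also have "\<dots> \<le> B1 + B2 + B3 + B4"
      using B1[of p] B2[of p] B3[of p] B4[of p] by (simp add: abs_mult)
    finally have "?n * ((1 + ?x) * (1 + ?y)) \<le> B1 + B2 + B3 + B4" .
    moreover have "(1 + ?x) * (1 + ?y) > 0" by (simp add: add_pos_nonneg)
    ultimately have "?n \<le> (B1 + B2 + B3 + B4) / ((1 + ?x) * (1 + ?y))"
      by (simp add: pos_le_divide_eq)
    then show ?thesis by (simp add: w_def)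
  qed
  then show ?thesis unfolding h_def by blast
qed

lemma schwartz_bound0: "schwartz f \<Longrightarrow> \<exists>C. \<forall>p. norm (f p) \<le> C * w p"
  using schwartz_bound[of f "[]"] by simp

lemma schwartz_integrable:
  assumes "schwartz f" shows "integrable lborel f"
proof -
  obtain C where C: "\<And>p. norm (f p) \<le> C * w p" using schwartz_bound0[OF assms] by blast
  show ?thesis
  proof (rule Bochner_Integration.integrable_bound[where f="\<lambda>p. C * w p"])
    show "integrable lborel (\<lambda>p. C * w p)" using integrable_w by simp
    show "f \<in> borel_measurable lborel" using assms by simp
    show "AE x in lborel. norm (f x) \<le> norm (C * w x)"
      using C w_pos by (auto intro: order_trans[OF C] abs_ge_self)
  qed
qed

lemma inv_sq_lim: "((\<lambda>s::real. 1 / (1 + s\<^sup>2)) \<longlongrightarrow> 0) at_top" "((\<lambda>s::real. 1 / (1 + s\<^sup>2)) \<longlongrightarrow> 0) at_bot"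
proof -
  show t: "((\<lambda>s::real. 1 / (1 + s\<^sup>2)) \<longlongrightarrow> 0) at_top"
    apply (rule tendsto_divide_0[OF tendsto_const])
    apply (rule filterlim_at_top_imp_at_infinity)
    apply (rule filterlim_tendsto_add_at_top[OF tendsto_const])
    by (rule filterlim_pow_at_top) (simp_all add: filterlim_ident)
  show "((\<lambda>s::real. 1 / (1 + s\<^sup>2)) \<longlongrightarrow> 0) at_bot"
    using t unfolding filterlim_at_bot_mirror by simp
qed

lemma decay_lim:
  fixes h :: "real \<Rightarrow> complex"
  assumes "\<And>s. norm (h s) \<le> C * (1 / (1 + s\<^sup>2))"
  shows "(h \<longlongrightarrow> 0) at_top" "(h \<longlongrightarrow> 0) at_bot"
proof -
  have e: "eventually (\<lambda>s. norm (h s) \<le> C * (1 / (1 + s\<^sup>2))) F" for F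
    using assms by (simp add: always_eventually)
  show "(h \<longlongrightarrow> 0) at_top"
    by (rule Lim_null_comparison[OF e tendsto_mult_right_zero[OF inv_sq_lim(1)]])
  show "(h \<longlongrightarrow> 0) at_bot"
    by (rule Lim_null_comparison[OF e tendsto_mult_right_zero[OF inv_sq_lim(2)]])
qed

lemma ftc_zero:
  fixes h h' :: "real \<Rightarrow> complex"
  assumes "\<And>x. (h has_vector_derivative h' x) (at x)" "continuous_on UNIV h'" "integrable lborel h'"
    "(h \<longlongrightarrow> 0) at_top" "(h \<longlongrightarrow> 0) at_bot"
  shows "integral\<^sup>L lborel h' = 0"
proof -
  have "(LBINT x=-\<infinity>..\<infinity>. h' x) = 0 - 0"
    by (rule interval_integral_FTC_integrable[where F=h])
       (use assms in \<open>auto simp: ereal_tendsto_simps1 set_integrable_def continuous_on_eq_continuous_at\<close>)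
  then show ?thesis by (simp add: interval_lebesgue_integral_def set_lebesgue_integral_def)
qed

lemma w_eq: "w (s, y) = 1 / (1 + y\<^sup>2) * (1 / (1 + s\<^sup>2))"
  by (simp add: w_def)

lemma w_eq2: "w (y, s) = 1 / (1 + y\<^sup>2) * (1 / (1 + s\<^sup>2))"
  by (simp add: w_def)

lemma w_bound_integrable:
  fixes F :: "real \<times> real \<Rightarrow> complex"
  assumes "F \<in> borel_measurable borel" "\<And>p. norm (F p) \<le> D * w p"
  shows "integrable lborel F"
proof (rule Bochner_Integration.integrable_bound[where f="\<lambda>p. D * w p"])
  show "integrable lborel (\<lambda>p. D * w p)" by (intro integrable_mult_right integrable_w)
  show "F \<in> borel_measurable lborel" using assms by simp
  show "AE x in lborel. norm (F x) \<le> norm (D * w x)"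
    using assms(2) by (auto intro: order_trans[OF assms(2)] abs_ge_self)
qed

lemma cauchy_bound_integrable:
  fixes F :: "real \<Rightarrow> complex"
  assumes "F \<in> borel_measurable borel" "\<And>s. norm (F s) \<le> D * (1 / (1 + s\<^sup>2))"
  shows "integrable lborel F"
proof (rule Bochner_Integration.integrable_bound[where f="\<lambda>s. D * (1 / (1 + s\<^sup>2))"])
  show "integrable lborel (\<lambda>s. D * (1 / (1 + s\<^sup>2)))" by (intro integrable_mult_right integrable_cauchy)
  show "F \<in> borel_measurable lborel" using assms by simp
  show "AE x in lborel. norm (F x) \<le> norm (D * (1 / (1 + x\<^sup>2)))"
  proof (rule AE_I2)
    fix x :: real
    have "D * (1 / (1 + x\<^sup>2)) \<le> norm (D * (1 / (1 + x\<^sup>2)))" by (metis abs_ge_self real_norm_def)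
    then show "norm (F x) \<le> norm (D * (1 / (1 + x\<^sup>2)))" using assms(2)[of x] by linarith
  qed
qed

lemma ibp_fst:
  fixes F F' :: "real \<times> real \<Rightarrow> complex"
  assumes deriv: "\<And>s y. ((\<lambda>s. F (s, y)) has_vector_derivative F' (s, y)) (at s)"
    and cont: "continuous_on UNIV F'"
    and bF: "\<And>p. norm (F p) \<le> C * w p" and bF': "\<And>p. norm (F' p) \<le> D * w p"
  shows "integral\<^sup>L lborel F' = 0"
proof -
  have meas[measurable]: "F' \<in> borel_measurable borel" using cont borel_measurable_continuous_onI by blast
  have int: "integrable lborel F'" by (rule w_bound_integrable[OF meas bF'])
  have int2: "integrable (lborel \<Otimes>\<^sub>M lborel) (case_prod (\<lambda>x y. F' (x, y)))"
    using int by (simp add: lborel_prod)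
  have "integral\<^sup>L lborel F' = (\<integral>y. (\<integral>x. F' (x, y) \<partial>lborel) \<partial>lborel)"
    using lborel_pair.integral_snd[OF int2] by (simp add: lborel_prod)
  also have "\<dots> = (\<integral>y. 0 \<partial>lborel)"
  proof -
    have "(\<integral>x. F' (x, y) \<partial>lborel) = 0" for y :: real
    proof -
    have cy: "continuous_on UNIV (\<lambda>s. F' (s, y))"
      by (rule continuous_on_compose2[OF cont]) (auto intro!: continuous_intros)
    show "(\<integral>x. F' (x, y) \<partial>lborel) = 0"
    proof (rule ftc_zero[where h="\<lambda>s. F (s, y)"])
      show "continuous_on UNIV (\<lambda>s. F' (s, y))" by (rule cy)
      show "integrable lborel (\<lambda>s. F' (s, y))"
      proof (rule cauchy_bound_integrable[where D="D * (1 / (1 + y\<^sup>2))"])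
        show "(\<lambda>s. F' (s, y)) \<in> borel_measurable borel" using cy borel_measurable_continuous_onI by blast
        show "norm (F' (s, y)) \<le> D * (1 / (1 + y\<^sup>2)) * (1 / (1 + s\<^sup>2))" for s
          using bF'[of "(s, y)"] by (simp add: w_eq mult_ac)
      qed
      have b: "norm (F (s, y)) \<le> C * (1 / (1 + y\<^sup>2)) * (1 / (1 + s\<^sup>2))" for s
        using bF[of "(s, y)"] by (simp add: w_eq mult_ac)
      show "((\<lambda>s. F (s, y)) \<longlongrightarrow> 0) at_top" by (rule decay_lim(1)[OF b])
      show "((\<lambda>s. F (s, y)) \<longlongrightarrow> 0) at_bot" by (rule decay_lim(2)[OF b])
    qed (rule deriv)
    qed
    then show ?thesis by simp
  qed
  finally show ?thesis by simp
qed

lemma ibp_snd: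
  fixes F F' :: "real \<times> real \<Rightarrow> complex"
  assumes deriv: "\<And>s y. ((\<lambda>s. F (y, s)) has_vector_derivative F' (y, s)) (at s)"
    and cont: "continuous_on UNIV F'"
    and bF: "\<And>p. norm (F p) \<le> C * w p" and bF': "\<And>p. norm (F' p) \<le> D * w p"
  shows "integral\<^sup>L lborel F' = 0"
proof -
  have meas[measurable]: "F' \<in> borel_measurable borel" using cont borel_measurable_continuous_onI by blast
  have int: "integrable lborel F'" by (rule w_bound_integrable[OF meas bF'])
  have int2: "integrable (lborel \<Otimes>\<^sub>M lborel) (case_prod (\<lambda>x y. F' (x, y)))"
    using int by (simp add: lborel_prod)
  have "integral\<^sup>L lborel F' = (\<integral>y. (\<integral>x. F' (y, x) \<partial>lborel) \<partial>lborel)"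
    using lborel_pair.integral_fst[OF int2] by (simp add: lborel_prod)
  also have "\<dots> = (\<integral>y. 0 \<partial>lborel)"
  proof -
    have "(\<integral>x. F' (y, x) \<partial>lborel) = 0" for y :: real
    proof -
    have cy: "continuous_on UNIV (\<lambda>s. F' (y, s))"
      by (rule continuous_on_compose2[OF cont]) (auto intro!: continuous_intros)
    show "(\<integral>x. F' (y, x) \<partial>lborel) = 0"
    proof (rule ftc_zero[where h="\<lambda>s. F (y, s)"])
      show "continuous_on UNIV (\<lambda>s. F' (y, s))" by (rule cy)
      show "integrable lborel (\<lambda>s. F' (y, s))"
      proof (rule cauchy_bound_integrable[where D="D * (1 / (1 + y\<^sup>2))"])
        show "(\<lambda>s. F' (y, s)) \<in> borel_measurable borel" using cy borel_measurable_continuous_onI by blast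
        show "norm (F' (y, s)) \<le> D * (1 / (1 + y\<^sup>2)) * (1 / (1 + s\<^sup>2))" for s
          using bF'[of "(y, s)"] by (simp add: w_eq2 mult_ac)
      qed
      have b: "norm (F (y, s)) \<le> C * (1 / (1 + y\<^sup>2)) * (1 / (1 + s\<^sup>2))" for s
        using bF[of "(y, s)"] by (simp add: w_eq2 mult_ac)
      show "((\<lambda>s. F (y, s)) \<longlongrightarrow> 0) at_top" by (rule decay_lim(1)[OF b])
      show "((\<lambda>s. F (y, s)) \<longlongrightarrow> 0) at_bot" by (rule decay_lim(2)[OF b])
    qed (rule deriv)
    qed
    then show ?thesis by simp
  qed
  finally show ?thesis by simp
qed



lemma line_deriv0:
  assumes "g differentiable (at (s, y))"
  shows "((\<lambda>s. g (s, y)) has_vector_derivative pd 0 g (s, y)) (at s)"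
proof -
  obtain D where D: "(g has_derivative D) (at (s, y))" using assms unfolding differentiable_def by blast
  have "((\<lambda>t. (t, y)) has_derivative (\<lambda>h. (h, 0))) (at s)"
    by (intro derivative_eq_intros) simp_all
  from has_derivative_compose[OF this D]
  have 1: "((\<lambda>t. g (t, y)) has_derivative (\<lambda>h. D (h, 0))) (at s)" .
  have eq0: "D (h, 0) = h *\<^sub>R D (1, 0)" for h
  proof -
    have "D (h *\<^sub>R (1,0)) = h *\<^sub>R D (1, 0)" by (rule linear_cmul[OF has_derivative_linear[OF D]])
    moreover have "h *\<^sub>R (1::real, 0::real) = (h, 0)" by simp
    ultimately show ?thesis by simp
  qed
  have eq: "(\<lambda>h. D (h, 0)) = (\<lambda>h. h *\<^sub>R D (1, 0))" by (rule ext) (rule eq0)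
  have "((\<lambda>t. g (t, y)) has_vector_derivative D (1, 0)) (at s)"
    unfolding has_vector_derivative_def using 1 unfolding eq .
  moreover have "pd 0 g (s, y) = D (1, 0)" using pd_from_deriv[OF D, of 0] by (simp add: basis_vec_def)
  ultimately show ?thesis by simp
qed

lemma line_deriv1:
  assumes "g differentiable (at (y, s))"
  shows "((\<lambda>s. g (y, s)) has_vector_derivative pd 1 g (y, s)) (at s)"
proof -
  obtain D where D: "(g has_derivative D) (at (y, s))" using assms unfolding differentiable_def by blast
  have "((\<lambda>t. (y, t)) has_derivative (\<lambda>h. (0, h))) (at s)"
    by (intro derivative_eq_intros) simp_all
  from has_derivative_compose[OF this D]
  have 1: "((\<lambda>t. g (y, t)) has_derivative (\<lambda>h. D (0, h))) (at s)" .
  have eq0: "D (0, h) = h *\<^sub>R D (0, 1)" for h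
  proof -
    have "D (h *\<^sub>R (0,1)) = h *\<^sub>R D (0, 1)" by (rule linear_cmul[OF has_derivative_linear[OF D]])
    moreover have "h *\<^sub>R (0::real, 1::real) = (0, h)" by simp
    ultimately show ?thesis by simp
  qed
  have eq: "(\<lambda>h. D (0, h)) = (\<lambda>h. h *\<^sub>R D (0, 1))" by (rule ext) (rule eq0)
  have "((\<lambda>t. g (y, t)) has_vector_derivative D (0, 1)) (at s)"
    unfolding has_vector_derivative_def using 1 unfolding eq .
  moreover have "pd 1 g (y, s) = D (0, 1)" using pd_from_deriv[OF D, of 1] by (simp add: basis_vec_def)
  ultimately show ?thesis by simp
qed

definition ee :: "real \<times> real \<Rightarrow> real \<times> real \<Rightarrow> complex" where
  "ee k y = exp (- \<i> * complex_of_real (mdot k y))"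

lemma ee_eq: "ee k y = exp (- \<i> * complex_of_real (fst k * fst y - snd k * snd y))"
  by (simp add: ee_def mdot_eq)

lemma norm_ee[simp]: "norm (ee k y) = 1"
proof -
  have "- \<i> * complex_of_real r = \<i> * complex_of_real (- r)" for r by simp
  then show ?thesis unfolding ee_def by (metis norm_exp_i_times)
qed

lemma ee_cont: "continuous_on UNIV (ee k)"
  unfolding ee_eq by (intro continuous_intros)

lemma ee_cont2: "continuous_on UNIV (\<lambda>z. ee (fst z) (snd z))"
  unfolding ee_eq by (intro continuous_intros)

lemma FT_ee: "FT g k = complex_of_real (1 / (2 * pi)) * (\<integral>y. ee k y * g y \<partial>lborel)"
  by (simp add: FT_def ee_def)

lemma lin_deriv: "((\<lambda>z::complex. c * z + d) has_field_derivative c) (at z)"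
proof -
  have "((\<lambda>z::complex. c * z + d) has_field_derivative c + 0) (at z)"
    by (rule DERIV_add[OF DERIV_cmult_Id DERIV_const])
  then show ?thesis by simp
qed

lemma expline_gen:
  "((\<lambda>s::real. exp (c * complex_of_real s + d)) has_vector_derivative (c * exp (c * complex_of_real s + d))) (at s)"
proof -
  have "((\<lambda>z. exp (c * z + d)) has_field_derivative (exp (c * complex_of_real s + d) * c)) (at (complex_of_real s))"
    by (rule DERIV_chain2[OF DERIV_exp lin_deriv])
  from has_vector_derivative_real_field[OF this] show ?thesis by (simp add: mult.commute)
qed

lemma expline:
  "((\<lambda>s. exp (- \<i> * complex_of_real (a * s - b))) has_vector_derivative
      (- \<i> * complex_of_real a * exp (- \<i> * complex_of_real (a * s - b)))) (at s)"
proof -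
  have eq: "(\<lambda>s. exp (- \<i> * complex_of_real (a * s - b))) = (\<lambda>s. exp ((- \<i> * complex_of_real a) * complex_of_real s + \<i> * complex_of_real b))"
    by (rule ext) (simp add: algebra_simps)
  have "- \<i> * complex_of_real (a * s - b) = (- \<i> * complex_of_real a) * complex_of_real s + \<i> * complex_of_real b"
    by (simp add: algebra_simps)
  then show ?thesis unfolding eq by (simp only: expline_gen)
qed

lemma expline2:
  "((\<lambda>s. exp (- \<i> * complex_of_real (a - b * s))) has_vector_derivative
      (\<i> * complex_of_real b * exp (- \<i> * complex_of_real (a - b * s)))) (at s)"
proof -
  have eq: "(\<lambda>s. exp (- \<i> * complex_of_real (a - b * s))) = (\<lambda>s. exp ((\<i> * complex_of_real b) * complex_of_real s + (- \<i> * complex_of_real a)))"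
    by (rule ext) (simp add: algebra_simps)
  have "- \<i> * complex_of_real (a - b * s) = (\<i> * complex_of_real b) * complex_of_real s + (- \<i> * complex_of_real a)"
    by (simp add: algebra_simps)
  then show ?thesis unfolding eq by (simp only: expline_gen)
qed

lemma schwartz_ee_integrable:
  assumes "schwartz h" shows "integrable lborel (\<lambda>y. ee k y * h y)"
proof -
  obtain C where C: "\<And>p. norm (h p) \<le> C * w p" using schwartz_bound0[OF assms] by blast
  have m: "(\<lambda>y. ee k y * h y) \<in> borel_measurable borel"
    using assms ee_cont[of k] by (intro borel_measurable_times) (auto intro: borel_measurable_continuous_onI)
  show ?thesis by (rule w_bound_integrable[OF m, where D=C]) (simp add: norm_mult C)
qed

lemma FT_pd0:
  assumes g: "schwartz g"
  shows "FT (pd 0 g) k = \<i> * complex_of_real (fst k) * FT g k"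
proof -
  have g1: "schwartz (pd 0 g)" using schwartz_pd[OF g] .
  obtain C0 where C0: "\<And>p. norm (g p) \<le> C0 * w p" using schwartz_bound0[OF g] by blast
  obtain C1 where C1: "\<And>p. norm (pd 0 g p) \<le> C1 * w p" using schwartz_bound0[OF g1] by blast
  define F where "F y = ee k y * g y" for y
  define F' where "F' y = ee k y * pd 0 g y - \<i> * complex_of_real (fst k) * (ee k y * g y)" for y
  have "integral\<^sup>L lborel F' = 0"
  proof (rule ibp_fst[where F=F and C=C0 and D="C1 + \<bar>fst k\<bar> * C0"])
    fix s y
    have e: "((\<lambda>s. ee k (s, y)) has_vector_derivative (- \<i> * complex_of_real (fst k) * ee k (s, y))) (at s)"
      unfolding ee_eq fst_conv snd_conv by (rule expline)
    have gd: "((\<lambda>s. g (s, y)) has_vector_derivative pd 0 g (s, y)) (at s)"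
      by (rule line_deriv0[OF schwartz_diff0[OF g]])
    show "((\<lambda>s. F (s, y)) has_vector_derivative F' (s, y)) (at s)"
      unfolding F_def using has_vector_derivative_eq_rhs[OF has_vector_derivative_mult[OF e gd]]
      by (simp add: F'_def algebra_simps)
  next
    show "continuous_on UNIV F'" unfolding F'_def
      by (intro continuous_on_diff continuous_on_add continuous_on_mult continuous_on_const ee_cont schwartz_cont g g1)
  next
    fix p show "norm (F p) \<le> C0 * w p" unfolding F_def by (simp add: norm_mult C0)
  next
    fix p
    have "norm (F' p) \<le> norm (ee k p * pd 0 g p) + norm (\<i> * complex_of_real (fst k) * (ee k p * g p))"
      unfolding F'_def by (rule norm_triangle_ineq4)
    also have "\<dots> = norm (pd 0 g p) + \<bar>fst k\<bar> * norm (g p)" by (simp add: norm_mult)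
    also have "\<dots> \<le> C1 * w p + \<bar>fst k\<bar> * (C0 * w p)"
      by (intro add_mono C1 mult_left_mono C0) simp
    finally show "norm (F' p) \<le> (C1 + \<bar>fst k\<bar> * C0) * w p" by (simp add: algebra_simps)
  qed
  moreover have "integral\<^sup>L lborel F' = (\<integral>y. ee k y * pd 0 g y \<partial>lborel) - \<i> * complex_of_real (fst k) * (\<integral>y. ee k y * g y \<partial>lborel)"
    unfolding F'_def
    using schwartz_ee_integrable[OF g1, of k] schwartz_ee_integrable[OF g, of k] by simp
  ultimately show ?thesis unfolding FT_ee by simp
qed

lemma FT_pd1:
  assumes g: "schwartz g"
  shows "FT (pd 1 g) k = - \<i> * complex_of_real (snd k) * FT g k"
proof -
  have g1: "schwartz (pd 1 g)" using schwartz_pd[OF g] .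
  obtain C0 where C0: "\<And>p. norm (g p) \<le> C0 * w p" using schwartz_bound0[OF g] by blast
  obtain C1 where C1: "\<And>p. norm (pd 1 g p) \<le> C1 * w p" using schwartz_bound0[OF g1] by blast
  define F where "F y = ee k y * g y" for y
  define F' where "F' y = ee k y * pd 1 g y + \<i> * complex_of_real (snd k) * (ee k y * g y)" for y
  have "integral\<^sup>L lborel F' = 0"
  proof (rule ibp_snd[where F=F and C=C0 and D="C1 + \<bar>snd k\<bar> * C0"])
    fix s y
    have e: "((\<lambda>s. ee k (y, s)) has_vector_derivative (\<i> * complex_of_real (snd k) * ee k (y, s))) (at s)"
      unfolding ee_eq fst_conv snd_conv by (rule expline2)
    have gd: "((\<lambda>s. g (y, s)) has_vector_derivative pd 1 g (y, s)) (at s)"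
      by (rule line_deriv1[OF schwartz_diff0[OF g]])
    show "((\<lambda>s. F (y, s)) has_vector_derivative F' (y, s)) (at s)"
      unfolding F_def using has_vector_derivative_eq_rhs[OF has_vector_derivative_mult[OF e gd]]
      by (simp add: F'_def algebra_simps)
  next
    show "continuous_on UNIV F'" unfolding F'_def
      by (intro continuous_on_diff continuous_on_add continuous_on_mult continuous_on_const ee_cont schwartz_cont g g1)
  next
    fix p show "norm (F p) \<le> C0 * w p" unfolding F_def by (simp add: norm_mult C0)
  next
    fix p
    have "norm (F' p) \<le> norm (ee k p * pd 1 g p) + norm (\<i> * complex_of_real (snd k) * (ee k p * g p))"
      unfolding F'_def by (rule norm_triangle_ineq)
    also have "\<dots> = norm (pd 1 g p) + \<bar>snd k\<bar> * norm (g p)" by (simp add: norm_mult)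
    also have "\<dots> \<le> C1 * w p + \<bar>snd k\<bar> * (C0 * w p)"
      by (intro add_mono C1 mult_left_mono C0) simp
    finally show "norm (F' p) \<le> (C1 + \<bar>snd k\<bar> * C0) * w p" by (simp add: algebra_simps)
  qed
  moreover have "integral\<^sup>L lborel F' = (\<integral>y. ee k y * pd 1 g y \<partial>lborel) + \<i> * complex_of_real (snd k) * (\<integral>y. ee k y * g y \<partial>lborel)"
    unfolding F'_def
    using schwartz_ee_integrable[OF g1, of k] schwartz_ee_integrable[OF g, of k] by simp
  ultimately have "(\<integral>y. ee k y * pd 1 g y \<partial>lborel) = - (\<i> * complex_of_real (snd k) * (\<integral>y. ee k y * g y \<partial>lborel))"
    by (simp add: eq_neg_iff_add_eq_0)
  then show ?thesis unfolding FT_ee by simp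
qed

lemma FT_norm:
  assumes "schwartz h"
  shows "norm (FT h k) \<le> (1 / (2 * pi)) * (\<integral>y. norm (h y) \<partial>lborel)"
proof -
  have "norm (FT h k) = (1 / (2 * pi)) * norm (\<integral>y. ee k y * h y \<partial>lborel)"
    unfolding FT_ee norm_mult norm_of_real by simp
  also have "\<dots> \<le> (1 / (2 * pi)) * (\<integral>y. norm (ee k y * h y) \<partial>lborel)"
    by (intro mult_left_mono integral_norm_bound) simp
  also have "\<dots> = (1 / (2 * pi)) * (\<integral>y. norm (h y) \<partial>lborel)"
    by (simp add: norm_mult)
  finally show ?thesis .
qed

lemma FT_pd00: "schwartz g \<Longrightarrow> FT (pd 0 (pd 0 g)) k = - complex_of_real ((fst k)\<^sup>2) * FT g k"
proof -
  assume g: "schwartz g"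
  have "FT (pd 0 (pd 0 g)) k = (\<i> * \<i>) * (complex_of_real (fst k) * complex_of_real (fst k) * FT g k)"
    unfolding FT_pd0[OF schwartz_pd[OF g, of 0], of k] FT_pd0[OF g, of k] by (simp only: mult_ac)
  then show ?thesis by (simp add: power2_eq_square)
qed

lemma FT_pd11: "schwartz g \<Longrightarrow> FT (pd 1 (pd 1 g)) k = - complex_of_real ((snd k)\<^sup>2) * FT g k"
proof -
  assume g: "schwartz g"
  have "FT (pd 1 (pd 1 g)) k = (\<i> * \<i>) * (complex_of_real (snd k) * complex_of_real (snd k) * FT g k)"
    unfolding FT_pd1[OF schwartz_pd[OF g, of 1], of k] FT_pd1[OF g, of k] by (simp add: mult_ac)
  then show ?thesis by (simp add: power2_eq_square)
qed

lemma FT_decay: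
  assumes g: "schwartz g"
  shows "\<exists>C. \<forall>k. norm (FT g k) \<le> C * w k"
proof -
  define g1 where "g1 = pd 1 (pd 1 g)"
  have s1: "schwartz g1" unfolding g1_def using g by (intro schwartz_pd)
  have s0: "schwartz (pd 0 (pd 0 g))" using g by (intro schwartz_pd)
  have s01: "schwartz (pd 0 (pd 0 g1))" using s1 by (intro schwartz_pd)
  define N where "N h = (1 / (2 * pi)) * (\<integral>y. norm (h y) \<partial>lborel)" for h :: "real \<times> real \<Rightarrow> complex"
  define C where "C = N g + N (pd 0 (pd 0 g)) + N g1 + N (pd 0 (pd 0 g1))"
  have "norm (FT g k) \<le> C * w k" for k
  proof -
    let ?x = "(fst k)\<^sup>2" and ?y = "(snd k)\<^sup>2"
    have e: "complex_of_real ((1 + ?x) * (1 + ?y)) * FT g k =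
        FT g k - FT (pd 0 (pd 0 g)) k - FT g1 k + FT (pd 0 (pd 0 g1)) k"
      unfolding g1_def FT_pd00[OF g] FT_pd00[OF s1[unfolded g1_def]] FT_pd11[OF g]
      by (simp add: algebra_simps)
    have "(1 + ?x) * (1 + ?y) * norm (FT g k) = norm (complex_of_real ((1 + ?x) * (1 + ?y)) * FT g k)"
      unfolding norm_mult norm_of_real by (simp add: abs_of_nonneg)
    also have "\<dots> \<le> norm (FT g k) + norm (FT (pd 0 (pd 0 g)) k) + norm (FT g1 k) + norm (FT (pd 0 (pd 0 g1)) k)"
      unfolding e by (intro order_trans[OF norm_triangle_ineq] add_mono order_trans[OF norm_triangle_ineq4]) auto
    also have "\<dots> \<le> C"
      unfolding C_def N_def by (intro add_mono FT_norm g s0 s1 s01)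
    finally have "norm (FT g k) * ((1 + ?x) * (1 + ?y)) \<le> C" by (simp add: mult_ac)
    moreover have "(1 + ?x) * (1 + ?y) > 0" by (simp add: add_pos_nonneg)
    ultimately have "norm (FT g k) \<le> C / ((1 + ?x) * (1 + ?y))" by (simp add: pos_le_divide_eq)
    then show ?thesis by (simp add: w_def)
  qed
  then show ?thesis by blast
qed

lemma FT_meas:
  assumes g: "schwartz g"
  shows "FT g \<in> borel_measurable borel"
proof -
  have c: "continuous_on UNIV (\<lambda>z::(real \<times> real) \<times> (real \<times> real). ee (fst z) (snd z) * g (snd z))"
    by (intro continuous_on_mult ee_cont2 continuous_on_compose2[OF schwartz_cont[OF g]] continuous_intros) auto
  have "(\<lambda>z::(real \<times> real) \<times> (real \<times> real). ee (fst z) (snd z) * g (snd z)) \<in> borel_measurable borel"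
    using c borel_measurable_continuous_onI by blast
  then have "case_prod (\<lambda>k y. ee k y * g y) \<in> borel_measurable (lborel \<Otimes>\<^sub>M lborel)"
    by (simp add: lborel_prod case_prod_beta')
  from lborel.borel_measurable_lebesgue_integral[OF this]
  have "(\<lambda>k. \<integral>y. ee k y * g y \<partial>lborel) \<in> borel_measurable lborel" .
  then have "(\<lambda>k. \<integral>y. ee k y * g y \<partial>lborel) \<in> borel_measurable borel" by simp
  then show ?thesis unfolding FT_ee[abs_def] by measurable
qed

lemma subst2:
  fixes F :: "real \<times> real \<Rightarrow> complex" and l :: real
  assumes l: "l \<noteq> 0" and F[measurable]: "F \<in> borel_measurable borel"
  shows "(\<integral>y. F y \<partial>lborel) = complex_of_real (l\<^sup>2) * (\<integral>w. F (x + l *\<^sub>R w) \<partial>lborel)"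
proof -
  have eq: "(lborel :: (real \<times> real) measure) = density (distr lborel borel (\<lambda>w. x + l *\<^sub>R w)) (\<lambda>_. \<bar>l\<bar> ^ DIM(real \<times> real))"
    by (rule lborel_affine[OF l])
  have "(\<integral>y. F y \<partial>lborel) = (\<integral>y. F y \<partial>(density (distr lborel borel (\<lambda>w. x + l *\<^sub>R w)) (\<lambda>_. ennreal (\<bar>l\<bar> ^ DIM(real \<times> real)))))"
    using eq by simp
  also have "\<dots> = (\<integral>y. (\<bar>l\<bar> ^ DIM(real \<times> real)) *\<^sub>R F y \<partial>(distr lborel borel (\<lambda>w. x + l *\<^sub>R w)))"
    by (rule integral_density) auto
  also have "\<dots> = (\<integral>w. (\<bar>l\<bar> ^ DIM(real \<times> real)) *\<^sub>R F (x + l *\<^sub>R w) \<partial>lborel)"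
    by (rule integral_distr) auto
  also have "\<dots> = complex_of_real (l\<^sup>2) * (\<integral>w. F (x + l *\<^sub>R w) \<partial>lborel)"
    by (simp add: scaleR_conv_of_real power2_eq_square)
  finally show ?thesis .
qed

definition gs :: "real \<Rightarrow> real \<times> real \<Rightarrow> complex" where
  "gs l p = complex_of_real (exp (- (l^2 * (fst p)^2) / 2)) * complex_of_real (exp (- (l^2 * (snd p)^2) / 2))"

definition ep :: "real \<times> real \<Rightarrow> real \<times> real \<Rightarrow> complex" where
  "ep p x = exp (\<i> * complex_of_real (mdot p x))"

lemma norm_ep[simp]: "norm (ep p x) = 1"
  unfolding ep_def by (rule norm_exp_i_times)

lemma gs_integrable: "l \<noteq> 0 \<Longrightarrow> integrable lborel (gs l)"
  using prod_integrable(1)[OF gauss_int1(1)[of l 0] gauss_int1(1)[of l 0]]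
  by (simp add: gs_def[abs_def])

lemma kernel:
  assumes l: "l \<noteq> 0"
  shows "(\<integral>p. ep p z * gs l p \<partial>lborel) =
     complex_of_real (2 * pi / l\<^sup>2 * exp (- ((fst z)\<^sup>2) / (2 * l\<^sup>2)) * exp (- ((snd z)\<^sup>2) / (2 * l\<^sup>2)))"
proof -
  define a where "a s = exp (\<i> * complex_of_real (fst z * s)) * complex_of_real (exp (- (l^2 * s^2) / 2))" for s
  define b where "b s = exp (\<i> * complex_of_real (- snd z * s)) * complex_of_real (exp (- (l^2 * s^2) / 2))" for s
  have e: "ep p z * gs l p = a (fst p) * b (snd p)" for p
  proof -
    have h: "\<i> * complex_of_real (mdot p z) = \<i> * complex_of_real (fst z * fst p) + \<i> * complex_of_real (- snd z * snd p)"
      by (simp add: mdot_eq algebra_simps)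
    have "ep p z = exp (\<i> * complex_of_real (fst z * fst p)) * exp (\<i> * complex_of_real (- snd z * snd p))"
      unfolding ep_def h by (rule exp_add)
    then show ?thesis unfolding a_def b_def gs_def by (simp add: mult_ac)
  qed
  have "(\<integral>p. ep p z * gs l p \<partial>lborel) = (\<integral>p. a (fst p) * b (snd p) \<partial>lborel)"
    by (simp add: e)
  also have "\<dots> = (\<integral>s. a s \<partial>lborel) * (\<integral>s. b s \<partial>lborel)"
  proof (rule prod_integrable(2))
    show "integrable lborel a" unfolding a_def by (rule gauss_int1(1)[OF l])
    show "integrable lborel b" unfolding b_def by (rule gauss_int1(1)[OF l])
  qed
  also have "\<dots> = complex_of_real (sqrt (2*pi) / \<bar>l\<bar> * exp (- ((fst z)^2) / (2 * l^2))) *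
                    complex_of_real (sqrt (2*pi) / \<bar>l\<bar> * exp (- ((- snd z)^2) / (2 * l^2)))"
    unfolding a_def b_def by (simp only: gauss_int1(2)[OF l])
  also have "\<dots> = complex_of_real (2 * pi / l\<^sup>2 * exp (- ((fst z)\<^sup>2) / (2 * l\<^sup>2)) * exp (- ((snd z)\<^sup>2) / (2 * l\<^sup>2)))"
  proof -
    have "sqrt (2*pi) / \<bar>l\<bar> * (sqrt (2*pi) / \<bar>l\<bar>) = 2 * pi / l\<^sup>2"
    proof -
      have "sqrt (2*pi) * sqrt (2*pi) = 2 * pi" by simp
      moreover have "\<bar>l\<bar> * \<bar>l\<bar> = l\<^sup>2" by (simp add: power2_eq_square)
      ultimately show ?thesis by (metis times_divide_times_eq)
    qed
    then have "sqrt (2*pi) / \<bar>l\<bar> * exp (- ((fst z)^2) / (2 * l^2)) * (sqrt (2*pi) / \<bar>l\<bar> * exp (- ((- snd z)^2) / (2 * l^2)))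
        = 2 * pi / l\<^sup>2 * exp (- ((fst z)\<^sup>2) / (2 * l\<^sup>2)) * exp (- ((snd z)\<^sup>2) / (2 * l\<^sup>2))"
    proof -
      let ?A = "sqrt (2*pi) / \<bar>l\<bar>" and ?B = "exp (- ((fst z)^2) / (2 * l^2))" and ?C = "exp (- ((snd z)^2) / (2 * l^2))"
      have "?A * ?B * (?A * exp (- ((- snd z)^2) / (2 * l^2))) = (?A * ?A) * ?B * ?C"
        by (simp only: power2_minus mult_ac)
      then show ?thesis using \<open>?A * ?A = 2 * pi / l\<^sup>2\<close> by simp
    qed
    then show ?thesis by (simp only: of_real_mult[symmetric])
  qed
  finally show ?thesis .
qed

lemma ee_ep: "ee p y * ep p x = ep p (x - y)"
proof -
  have "- \<i> * complex_of_real (mdot p y) + \<i> * complex_of_real (mdot p x) = \<i> * complex_of_real (mdot p (x - y))"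
    by (simp add: mdot_eq algebra_simps)
  then show ?thesis unfolding ee_def ep_def by (metis mult_exp_exp)
qed

lemma ep_cont2: "continuous_on UNIV (\<lambda>z. ep (fst z) (snd z))"
  unfolding ep_def mdot_eq by (intro continuous_intros)

lemma gs_cont: "continuous_on UNIV (gs l)"
  unfolding gs_def by (intro continuous_intros) auto

lemma ep_cont1: "continuous_on UNIV (\<lambda>p. ep p x)"
  unfolding ep_def mdot_eq by (intro continuous_intros)

lemma fubini_step:
  assumes g: "schwartz g" and l: "l \<noteq> 0"
  shows "(\<integral>p. FT g p * ep p x * gs l p \<partial>lborel) =
     complex_of_real (1 / (2 * pi)) * (\<integral>y. g y * (\<integral>p. ep p (x - y) * gs l p \<partial>lborel) \<partial>lborel)"
proof -
  define c where "c = complex_of_real (1 / (2 * pi))"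
  define \<Phi> where "\<Phi> p y = ee p y * g y * (ep p x * gs l p)" for p y
  obtain C where C: "\<And>p. norm (g p) \<le> C * w p" using schwartz_bound0[OF g] by blast
  have int: "integrable (lborel \<Otimes>\<^sub>M lborel) (case_prod \<Phi>)"
  proof -
    have i1: "integrable lborel (\<lambda>z::(real\<times>real)\<times>(real\<times>real). gs l (fst z) * complex_of_real (C * w (snd z)))"
      by (rule prod_integrable(1)[OF gs_integrable[OF l]]) (intro integrable_of_real integrable_mult_right integrable_w)
    have cont: "continuous_on UNIV (\<lambda>z::(real\<times>real)\<times>(real\<times>real). \<Phi> (fst z) (snd z))"
      unfolding \<Phi>_def
      by (intro continuous_on_mult ee_cont2 continuous_on_compose2[OF schwartz_cont[OF g]]
            continuous_on_compose2[OF gs_cont] continuous_on_compose2[OF ep_cont1] continuous_intros) auto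
    have "integrable lborel (\<lambda>z::(real\<times>real)\<times>(real\<times>real). \<Phi> (fst z) (snd z))"
    proof (rule Bochner_Integration.integrable_bound[OF i1])
      show "(\<lambda>z. \<Phi> (fst z) (snd z)) \<in> borel_measurable lborel"
        using cont borel_measurable_continuous_onI by simp
      show "AE z in lborel. norm (\<Phi> (fst z) (snd z)) \<le> norm (gs l (fst z) * complex_of_real (C * w (snd z)))"
      proof (rule AE_I2)
        fix z :: "(real\<times>real)\<times>(real\<times>real)"
        have "norm (\<Phi> (fst z) (snd z)) = norm (gs l (fst z)) * norm (g (snd z))"
          by (simp add: \<Phi>_def norm_mult)
        also have "\<dots> \<le> norm (gs l (fst z)) * \<bar>C * w (snd z)\<bar>"
          by (intro mult_left_mono order_trans[OF C] abs_ge_self) simp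
        also have "\<dots> = norm (gs l (fst z) * complex_of_real (C * w (snd z)))"
          by (simp add: norm_mult abs_mult)
        finally show "norm (\<Phi> (fst z) (snd z)) \<le> norm (gs l (fst z) * complex_of_real (C * w (snd z)))" .
      qed
    qed
    then show ?thesis by (simp add: lborel_prod case_prod_beta')
  qed
  have "(\<integral>p. FT g p * ep p x * gs l p \<partial>lborel) = (\<integral>p. c * (\<integral>y. \<Phi> p y \<partial>lborel) \<partial>lborel)"
  proof -
    have "FT g p * ep p x * gs l p = c * (\<integral>y. \<Phi> p y \<partial>lborel)" for p
    proof -
      have "(\<integral>y. \<Phi> p y \<partial>lborel) = (\<integral>y. ee p y * g y \<partial>lborel) * (ep p x * gs l p)"
        unfolding \<Phi>_def by (rule integral_mult_left_zero)
      then show ?thesis unfolding FT_ee c_def by (simp add: mult_ac)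
    qed
    then show ?thesis by simp
  qed
  also have "\<dots> = c * (\<integral>p. (\<integral>y. \<Phi> p y \<partial>lborel) \<partial>lborel)" by simp
  also have "(\<integral>p. (\<integral>y. \<Phi> p y \<partial>lborel) \<partial>lborel) = (\<integral>y. (\<integral>p. \<Phi> p y \<partial>lborel) \<partial>lborel)"
    using lborel_pair.Fubini_integral[OF int] by simp
  also have "\<dots> = (\<integral>y. g y * (\<integral>p. ep p (x - y) * gs l p \<partial>lborel) \<partial>lborel)"
  proof -
    have "(\<integral>p. \<Phi> p y \<partial>lborel) = g y * (\<integral>p. ep p (x - y) * gs l p \<partial>lborel)" for y
    proof -
      have "\<Phi> p y = g y * (ep p (x - y) * gs l p)" for p
        unfolding \<Phi>_def ee_ep[symmetric] by (simp add: mult_ac)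
      then show ?thesis by simp
    qed
    then show ?thesis by simp
  qed
  finally show ?thesis unfolding c_def .
qed

lemma J_eq:
  assumes g: "schwartz g" and l: "l \<noteq> 0"
  shows "(\<integral>p. FT g p * ep p x * gs l p \<partial>lborel) = (\<integral>w. g (x + l *\<^sub>R w) * gs 1 w \<partial>lborel)"
proof -
  define E where "E y = exp (- ((fst (x - y))\<^sup>2) / (2 * l\<^sup>2)) * exp (- ((snd (x - y))\<^sup>2) / (2 * l\<^sup>2))" for y
  define F where "F y = g y * complex_of_real (E y)" for y
  have Fm: "F \<in> borel_measurable borel"
  proof -
    have "continuous_on UNIV E" unfolding E_def using l by (intro continuous_intros) auto
    then have "E \<in> borel_measurable borel" using borel_measurable_continuous_onI by blast
    then show ?thesis unfolding F_def using schwartz_meas[OF g] by measurable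
  qed
  have "(\<integral>p. FT g p * ep p x * gs l p \<partial>lborel) =
     complex_of_real (1 / (2 * pi)) * (\<integral>y. g y * (\<integral>p. ep p (x - y) * gs l p \<partial>lborel) \<partial>lborel)"
    by (rule fubini_step[OF g l])
  also have "(\<integral>y. g y * (\<integral>p. ep p (x - y) * gs l p \<partial>lborel) \<partial>lborel) = (\<integral>y. complex_of_real (2 * pi / l\<^sup>2) * F y \<partial>lborel)"
  proof -
    have "g y * (\<integral>p. ep p (x - y) * gs l p \<partial>lborel) = complex_of_real (2 * pi / l\<^sup>2) * F y" for y
      unfolding kernel[OF l] F_def E_def using l by (simp add: mult_ac)
    then show ?thesis by simp
  qed
  also have "\<dots> = complex_of_real (2 * pi / l\<^sup>2) * (\<integral>y. F y \<partial>lborel)" by simp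
  also have "(\<integral>y. F y \<partial>lborel) = complex_of_real (l\<^sup>2) * (\<integral>w. F (x + l *\<^sub>R w) \<partial>lborel)"
    by (rule subst2[OF l Fm])
  also have "(\<lambda>w. F (x + l *\<^sub>R w)) = (\<lambda>w. g (x + l *\<^sub>R w) * gs 1 w)"
  proof
    fix w :: "real \<times> real"
    have 1: "(fst (x - (x + l *\<^sub>R w)))\<^sup>2 / (2 * l\<^sup>2) = (fst w)\<^sup>2 / 2"
      using l by (simp add: power2_eq_square field_simps)
    have 2: "(snd (x - (x + l *\<^sub>R w)))\<^sup>2 / (2 * l\<^sup>2) = (snd w)\<^sup>2 / 2"
      using l by (simp add: power2_eq_square field_simps)
    have "E (x + l *\<^sub>R w) = exp (- ((fst w)\<^sup>2 / 2)) * exp (- ((snd w)\<^sup>2 / 2))"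
      unfolding E_def minus_divide_left[symmetric] 1 2 ..
    then show "F (x + l *\<^sub>R w) = g (x + l *\<^sub>R w) * gs 1 w"
      unfolding F_def gs_def by simp
  qed
  finally show ?thesis using l by (simp add: field_simps)
qed

lemma norm_gs_le: "norm (gs l p) \<le> 1"
proof -
  have a: "exp (- (l^2 * (fst p)^2) / 2) \<le> 1" by simp
  have b: "exp (- (l^2 * (snd p)^2) / 2) \<le> 1" by simp
  have "norm (gs l p) = exp (- (l^2 * (fst p)^2) / 2) * exp (- (l^2 * (snd p)^2) / 2)"
    unfolding gs_def norm_mult norm_of_real by simp
  also have "\<dots> \<le> 1 * 1" by (intro mult_mono a b) auto
  finally show ?thesis by simp
qed

lemma w_le1: "w p \<le> 1"
proof -
  have a: "1 / (1 + (fst p)\<^sup>2) \<le> 1" by (simp add: divide_le_eq_1 add_pos_nonneg)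
  have b: "1 / (1 + (snd p)\<^sup>2) \<le> 1" by (simp add: divide_le_eq_1 add_pos_nonneg)
  have "w p \<le> 1 * 1" unfolding w_def by (intro mult_mono a b) (auto simp: add_pos_nonneg)
  then show ?thesis by simp
qed

lemma gs1_int: "integrable lborel (gs 1)" "(\<integral>w. gs 1 w \<partial>lborel) = complex_of_real (2 * pi)"
proof -
  define a where "a s = exp (\<i> * complex_of_real (0 * s)) * complex_of_real (exp (- (1^2 * s^2) / 2))" for s :: real
  have ia: "integrable lborel a" unfolding a_def by (rule gauss_int1(1)) simp
  have va: "(\<integral>s. a s \<partial>lborel) = complex_of_real (sqrt (2*pi))"
    unfolding a_def using gauss_int1(2)[of 1 0] by simp
  have e: "gs 1 = (\<lambda>w. a (fst w) * a (snd w))" unfolding gs_def a_def by (rule ext) simp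
  show "integrable lborel (gs 1)" unfolding e by (rule prod_integrable(1)[OF ia ia])
  have "(\<integral>w. gs 1 w \<partial>lborel) = complex_of_real (sqrt (2*pi)) * complex_of_real (sqrt (2*pi))"
    unfolding e prod_integrable(2)[OF ia ia] va ..
  also have "\<dots> = complex_of_real (2 * pi)" by (simp only: of_real_mult[symmetric]) simp
  finally show "(\<integral>w. gs 1 w \<partial>lborel) = complex_of_real (2 * pi)" .
qed

lemma inversion:
  assumes g: "schwartz g"
  shows "complex_of_real (1 / (2 * pi)) * (\<integral>p. FT g p * exp (\<i> * complex_of_real (mdot p x)) \<partial>lborel) = g x"
proof -
  define l where "l n = inverse (real (Suc n))" for n
  have l0: "l n \<noteq> 0" for n unfolding l_def by simp
  have llim: "l \<longlonglongrightarrow> 0" unfolding l_def by (rule LIMSEQ_inverse_real_of_nat)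
  obtain C where C: "\<And>k. norm (FT g k) \<le> C * w k" using FT_decay[OF g] by blast
  obtain B where B: "\<And>p. norm (g p) \<le> B * w p" using schwartz_bound0[OF g] by blast
  have FTm: "FT g \<in> borel_measurable borel" by (rule FT_meas[OF g])
  have epm: "(\<lambda>p. ep p x) \<in> borel_measurable borel" using ep_cont1 borel_measurable_continuous_onI by blast
  have gsm: "gs l' \<in> borel_measurable borel" for l' using gs_cont borel_measurable_continuous_onI by blast
  have gm: "g \<in> borel_measurable borel" by (rule schwartz_meas[OF g])
  have A: "(\<lambda>n. \<integral>p. FT g p * ep p x * gs (l n) p \<partial>lborel) \<longlonglongrightarrow> (\<integral>p. FT g p * ep p x \<partial>lborel)"
  proof (rule integral_dominated_convergence[where w="\<lambda>p. C * w p"])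
    show "(\<lambda>p. FT g p * ep p x) \<in> borel_measurable lborel" using FTm epm by simp
    show "(\<lambda>p. FT g p * ep p x * gs (l n) p) \<in> borel_measurable lborel" for n using FTm epm gsm by simp
    show "integrable lborel (\<lambda>p. C * w p)" by (intro integrable_mult_right integrable_w)
    show "AE p in lborel. (\<lambda>n. FT g p * ep p x * gs (l n) p) \<longlonglongrightarrow> FT g p * ep p x"
    proof (rule AE_I2)
      fix p :: "real \<times> real"
      have "(\<lambda>n. gs (l n) p) \<longlonglongrightarrow> gs 0 p"
        unfolding gs_def by (intro tendsto_intros llim) auto
      then have "(\<lambda>n. FT g p * ep p x * gs (l n) p) \<longlonglongrightarrow> FT g p * ep p x * gs 0 p"
        by (intro tendsto_intros)
      then show "(\<lambda>n. FT g p * ep p x * gs (l n) p) \<longlonglongrightarrow> FT g p * ep p x"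
        by (simp add: gs_def)
    qed
    show "AE p in lborel. norm (FT g p * ep p x * gs (l n) p) \<le> C * w p" for n
    proof (rule AE_I2)
      fix p :: "real \<times> real"
      have "norm (FT g p * ep p x * gs (l n) p) = norm (FT g p) * norm (gs (l n) p)"
        by (simp add: norm_mult)
      also have "\<dots> \<le> norm (FT g p) * 1" by (intro mult_left_mono norm_gs_le) simp
      also have "\<dots> \<le> C * w p" using C[of p] by simp
      finally show "norm (FT g p * ep p x * gs (l n) p) \<le> C * w p" .
    qed
  qed
  have Bb: "norm (g p) \<le> \<bar>B\<bar>" for p
  proof -
    have "B * w p \<le> \<bar>B\<bar> * w p" using w_pos[of p] by (intro mult_right_mono) auto
    also have "\<dots> \<le> \<bar>B\<bar> * 1" using w_le1[of p] by (intro mult_left_mono) auto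
    finally show ?thesis using B[of p] by simp
  qed
  have Bl: "(\<lambda>n. \<integral>w. g (x + l n *\<^sub>R w) * gs 1 w \<partial>lborel) \<longlonglongrightarrow> (\<integral>w. g x * gs 1 w \<partial>lborel)"
  proof (rule integral_dominated_convergence[where w="\<lambda>w. \<bar>B\<bar> * norm (gs 1 w)"])
    show "(\<lambda>w. g x * gs 1 w) \<in> borel_measurable lborel" using gsm by simp
    show "(\<lambda>w. g (x + l n *\<^sub>R w) * gs 1 w) \<in> borel_measurable lborel" for n
    proof -
      have "(\<lambda>w. g (x + l n *\<^sub>R w)) \<in> borel_measurable borel"
        using gm by measurable
      then show ?thesis using gsm by simp
    qed
    show "integrable lborel (\<lambda>w. \<bar>B\<bar> * norm (gs 1 w))"
      by (intro integrable_mult_right integrable_norm gs1_int(1))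
    show "AE w in lborel. (\<lambda>n. g (x + l n *\<^sub>R w) * gs 1 w) \<longlonglongrightarrow> g x * gs 1 w"
    proof (rule AE_I2)
      fix w :: "real \<times> real"
      have "(\<lambda>n. x + l n *\<^sub>R w) \<longlonglongrightarrow> x + 0 *\<^sub>R w" by (intro tendsto_intros llim)
      then have "(\<lambda>n. x + l n *\<^sub>R w) \<longlonglongrightarrow> x" by simp
      moreover have "isCont g x"
        using schwartz_cont[OF g] by (metis continuous_on_eq_continuous_at open_UNIV UNIV_I)
      ultimately have "(\<lambda>n. g (x + l n *\<^sub>R w)) \<longlonglongrightarrow> g x"
        by (rule isCont_tendsto_compose[rotated])
      then show "(\<lambda>n. g (x + l n *\<^sub>R w) * gs 1 w) \<longlonglongrightarrow> g x * gs 1 w"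
        by (intro tendsto_intros)
    qed
    show "AE w in lborel. norm (g (x + l n *\<^sub>R w) * gs 1 w) \<le> \<bar>B\<bar> * norm (gs 1 w)" for n
      by (rule AE_I2) (simp add: norm_mult mult_right_mono Bb)
  qed
  have eqs: "(\<lambda>n. \<integral>p. FT g p * ep p x * gs (l n) p \<partial>lborel) = (\<lambda>n. \<integral>w. g (x + l n *\<^sub>R w) * gs 1 w \<partial>lborel)"
    using J_eq[OF g l0] by simp
  have "(\<integral>p. FT g p * ep p x \<partial>lborel) = (\<integral>w. g x * gs 1 w \<partial>lborel)"
    using LIMSEQ_unique[OF A Bl[folded eqs]] .
  also have "\<dots> = g x * complex_of_real (2 * pi)" using gs1_int(2) by simp
  finally show ?thesis unfolding ep_def by simp
qed

lemma pd_lin: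
  fixes u v :: "real \<times> real \<Rightarrow> complex" and c :: "real \<times> real \<Rightarrow> real"
  assumes u: "u differentiable (at p)" and v: "v differentiable (at p)" and c: "(c has_derivative Cd) (at p)"
  shows "pd \<mu> (\<lambda>q. a * (b * u q + complex_of_real (c q) * v q)) p =
     a * (b * pd \<mu> u p + complex_of_real (Cd (basis_vec \<mu>)) * v p + complex_of_real (c p) * pd \<mu> v p)"
proof -
  obtain U where U: "(u has_derivative U) (at p)" using u unfolding differentiable_def by blast
  obtain V where V: "(v has_derivative V) (at p)" using v unfolding differentiable_def by blast
  have c': "((\<lambda>q. complex_of_real (c q)) has_derivative (\<lambda>h. complex_of_real (Cd h))) (at p)"
    by (rule has_derivative_of_real[OF c])
  have "((\<lambda>q. a * (b * u q + complex_of_real (c q) * v q)) has_derivative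
      (\<lambda>h. a * (b * U h + (complex_of_real (c p) * V h + complex_of_real (Cd h) * v p)))) (at p)"
    by (intro has_derivative_mult_right has_derivative_add has_derivative_mult U V c')
  from pd_from_deriv[OF this, of \<mu>] pd_from_deriv[OF U, of \<mu>] pd_from_deriv[OF V, of \<mu>]
  show ?thesis by (simp add: algebra_simps)
qed

lemma Ex0: "Ex E 0 q = E * snd q"
  by (simp add: Ex_def eps_def coord_def numeral_2_eq_2)

lemma Ex1: "Ex E 1 q = - E * fst q"
  by (simp add: Ex_def eps_def coord_def numeral_2_eq_2)

lemma Ex1': "Ex E (Suc 0) q = - E * fst q"
  using Ex1 by simp

lemma Ex0_deriv: "(Ex E 0 has_derivative (\<lambda>h. E * snd h)) (at p)"
proof -
  have "((\<lambda>q. E * snd q) has_derivative (\<lambda>h. E * snd h)) (at p)"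
    by (intro has_derivative_mult_right has_derivative_snd has_derivative_ident)
  then show ?thesis unfolding Ex0[abs_def] .
qed

lemma Ex1_deriv: "(Ex E 1 has_derivative (\<lambda>h. - E * fst h)) (at p)"
proof -
  have "((\<lambda>q. - E * fst q) has_derivative (\<lambda>h. - E * fst h)) (at p)"
    by (intro has_derivative_mult_right has_derivative_fst has_derivative_ident)
  then show ?thesis unfolding Ex1[abs_def] .
qed

lemma Dop_fun: "Dop E \<mu> g = (\<lambda>q. (1 / complex_of_real (sqrt 2)) * (- \<i> * pd \<mu> g q + complex_of_real (Ex E \<mu> q) * g q))"
  by (rule ext) (simp add: Dop_def)

lemma pd_Dop0:
  assumes f: "schwartz f"
  shows "pd 0 (Dop E 0 f) p = (1 / complex_of_real (sqrt 2)) * (- \<i> * pd 0 (pd 0 f) p + complex_of_real (E * snd p) * pd 0 f p)"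
  unfolding Dop_fun
  using pd_lin[OF schwartz_diff0[OF schwartz_pd[OF f, of 0]] schwartz_diff0[OF f] Ex0_deriv[of E], where \<mu>=0 and a="1 / complex_of_real (sqrt 2)" and b="- \<i>"]
  by (simp add: basis_vec_def Ex0)

lemma pd_Dop1:
  assumes f: "schwartz f"
  shows "pd 1 (Dop E 1 f) p = (1 / complex_of_real (sqrt 2)) * (- \<i> * pd 1 (pd 1 f) p + complex_of_real (- E * fst p) * pd 1 f p)"
  unfolding Dop_fun
  using pd_lin[OF schwartz_diff0[OF schwartz_pd[OF f, of 1]] schwartz_diff0[OF f] Ex1_deriv[of E], where \<mu>=1 and a="1 / complex_of_real (sqrt 2)" and b="- \<i>"]
  by (simp add: basis_vec_def Ex1 Ex1')

lemma Dsq_formula: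
  assumes f: "schwartz f"
  shows "Dsq E f x = (1/2) * (- pd 0 (pd 0 f) x + pd 1 (pd 1 f) x
      - 2 * \<i> * complex_of_real E * (complex_of_real (snd x) * pd 0 f x + complex_of_real (fst x) * pd 1 f x)
      + complex_of_real (E^2 * ((snd x)\<^sup>2 - (fst x)\<^sup>2)) * f x)"
proof -
  have "Dsq E f x = Dop E 0 (Dop E 0 f) x - Dop E 1 (Dop E 1 f) x"
    by (simp add: Dsq_def eta_def numeral_2_eq_2)
  also have "\<dots> = (1 / complex_of_real (sqrt 2)) * (- \<i> * pd 0 (Dop E 0 f) x + complex_of_real (E * snd x) * Dop E 0 f x)
      - (1 / complex_of_real (sqrt 2)) * (- \<i> * pd 1 (Dop E 1 f) x + complex_of_real (- E * fst x) * Dop E 1 f x)"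
    by (simp only: Dop_def Ex0 Ex1)
  also have "\<dots> = (1 / (complex_of_real (sqrt 2) * complex_of_real (sqrt 2))) * ((- \<i> * (- \<i> * pd 0 (pd 0 f) x + complex_of_real (E * snd x) * pd 0 f x) + complex_of_real (E * snd x) * (- \<i> * pd 0 f x + complex_of_real (E * snd x) * f x))
      - (- \<i> * (- \<i> * pd 1 (pd 1 f) x + complex_of_real (- E * fst x) * pd 1 f x) + complex_of_real (- E * fst x) * (- \<i> * pd 1 f x + complex_of_real (- E * fst x) * f x)))"
    unfolding pd_Dop0[OF f] pd_Dop1[OF f] Dop_def Ex0 Ex1 by (simp add: algebra_simps)
  also have "complex_of_real (sqrt 2) * complex_of_real (sqrt 2) = 2"
    by (simp only: of_real_mult[symmetric]) simp
  finally show ?thesis by (simp add: algebra_simps power2_eq_square)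
qed

lemma inversion_ep:
  "schwartz g \<Longrightarrow> complex_of_real (1 / (2 * pi)) * (\<integral>p. FT g p * ep p x \<partial>lborel) = g x"
  using inversion[of g x] by (simp add: ep_def)

lemma FT_ep_int:
  assumes g: "schwartz g"
  shows "integrable lborel (\<lambda>p. FT g p * ep p x)"
proof -
  obtain C where C: "\<And>k. norm (FT g k) \<le> C * w k" using FT_decay[OF g] by blast
  have m: "(\<lambda>p. FT g p * ep p x) \<in> borel_measurable borel"
  proof -
    have "(\<lambda>p. ep p x) \<in> borel_measurable borel" using ep_cont1[of x] borel_measurable_continuous_onI by blast
    then show ?thesis using FT_meas[OF g] by (rule borel_measurable_times[rotated])
  qed
  show ?thesis by (rule w_bound_integrable[OF m, where D=C]) (simp add: norm_mult C)
qed

lemma star_formula: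
  assumes f: "schwartz f" and E: "E \<noteq> 0" and th: "\<theta> = 2 / E"
  shows "complex_of_real (E^2) * star_poly_left \<theta> Hpoly f x = (1/2) * (- pd 0 (pd 0 f) x + pd 1 (pd 1 f) x
      - 2 * \<i> * complex_of_real E * (complex_of_real (snd x) * pd 0 f x + complex_of_real (fst x) * pd 1 f x)
      + complex_of_real (E^2 * ((snd x)\<^sup>2 - (fst x)\<^sup>2)) * f x)"
proof -
  have s0: "schwartz (pd 0 f)" and s1: "schwartz (pd 1 f)" and s00: "schwartz (pd 0 (pd 0 f))"
    and s11: "schwartz (pd 1 (pd 1 f))" using f by (auto intro: schwartz_pd)
  define c where "c = complex_of_real (1 / (2 * pi))"
  define a1 where "a1 = complex_of_real (E^2 * ((snd x)\<^sup>2 - (fst x)\<^sup>2) / 2)"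
  define a2 where "a2 = - \<i> * complex_of_real (E * snd x)"
  define a3 where "a3 = - \<i> * complex_of_real (E * fst x)"
  define a4 where "a4 = - (1/2 :: complex)"
  define a5 where "a5 = (1/2 :: complex)"
  define T where "T h p = FT h p * ep p x" for h p
  have pt: "complex_of_real (E^2) * (FT f p * Hpoly (x + shiftv \<theta> p) * exp (\<i> * complex_of_real (mdot p x))) =
     a1 * T f p + (a2 * T (pd 0 f) p + (a3 * T (pd 1 f) p + (a4 * T (pd 0 (pd 0 f)) p + a5 * T (pd 1 (pd 1 f)) p)))" for p
  proof -
    let ?p0 = "fst p" and ?p1 = "snd p" and ?x0 = "fst x" and ?x1 = "snd x"
    have r: "E^2 * (((?x1 + \<theta>/2 * ?p0)\<^sup>2 - (?x0 + \<theta>/2 * ?p1)\<^sup>2) / 2) =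
        E^2 * (?x1\<^sup>2 - ?x0\<^sup>2) / 2 + E * ?x1 * ?p0 - E * ?x0 * ?p1 + ?p0\<^sup>2 / 2 - ?p1\<^sup>2 / 2"
      unfolding th using E by (simp add: field_simps power2_eq_square)
    have H: "Hpoly (x + shiftv \<theta> p) = complex_of_real (((?x1 + \<theta>/2 * ?p0)\<^sup>2 - (?x0 + \<theta>/2 * ?p1)\<^sup>2) / 2)"
      by (simp add: Hpoly_def shiftv_eq)
    have "complex_of_real (E^2) * Hpoly (x + shiftv \<theta> p) =
        complex_of_real (E^2 * (?x1\<^sup>2 - ?x0\<^sup>2) / 2 + E * ?x1 * ?p0 - E * ?x0 * ?p1 + ?p0\<^sup>2 / 2 - ?p1\<^sup>2 / 2)"
      unfolding H of_real_mult[symmetric] r ..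
    also have "\<dots> = a1 + a2 * (\<i> * complex_of_real ?p0) + a3 * (- \<i> * complex_of_real ?p1)
        + a4 * (- complex_of_real (?p0\<^sup>2)) + a5 * (- complex_of_real (?p1\<^sup>2))"
      unfolding a1_def a2_def a3_def a4_def a5_def by (simp add: algebra_simps)
    finally have e: "complex_of_real (E^2) * Hpoly (x + shiftv \<theta> p) = \<dots>" .
    have "complex_of_real (E^2) * (FT f p * Hpoly (x + shiftv \<theta> p) * exp (\<i> * complex_of_real (mdot p x)))
        = (complex_of_real (E^2) * Hpoly (x + shiftv \<theta> p)) * (FT f p * ep p x)"
      by (simp only: ep_def mult_ac)
    also have "\<dots> = (a1 + a2 * (\<i> * complex_of_real ?p0) + a3 * (- \<i> * complex_of_real ?p1)
        + a4 * (- complex_of_real (?p0\<^sup>2)) + a5 * (- complex_of_real (?p1\<^sup>2))) * (FT f p * ep p x)"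
      unfolding e ..
    also have "\<dots> = a1 * T f p + (a2 * T (pd 0 f) p + (a3 * T (pd 1 f) p + (a4 * T (pd 0 (pd 0 f)) p + a5 * T (pd 1 (pd 1 f)) p)))"
      unfolding T_def FT_pd0[OF f] FT_pd1[OF f] FT_pd00[OF f] FT_pd11[OF f] by (simp add: algebra_simps)
    finally show ?thesis .
  qed
  have iT: "integrable lborel (T h)" if "schwartz h" for h
    unfolding T_def[abs_def] using FT_ep_int[OF that] .
  have "complex_of_real (E^2) * star_poly_left \<theta> Hpoly f x =
      c * (\<integral>p. complex_of_real (E^2) * (FT f p * Hpoly (x + shiftv \<theta> p) * exp (\<i> * complex_of_real (mdot p x))) \<partial>lborel)"
    unfolding star_poly_left_def c_def by simp
  also have "\<dots> = c * (\<integral>p. a1 * T f p + (a2 * T (pd 0 f) p + (a3 * T (pd 1 f) p + (a4 * T (pd 0 (pd 0 f)) p + a5 * T (pd 1 (pd 1 f)) p))) \<partial>lborel)"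
    unfolding pt ..
  also have "\<dots> = c * (a1 * (\<integral>p. T f p \<partial>lborel) + (a2 * (\<integral>p. T (pd 0 f) p \<partial>lborel) + (a3 * (\<integral>p. T (pd 1 f) p \<partial>lborel)
        + (a4 * (\<integral>p. T (pd 0 (pd 0 f)) p \<partial>lborel) + a5 * (\<integral>p. T (pd 1 (pd 1 f)) p \<partial>lborel)))))"
    using iT[OF f] iT[OF s0] iT[OF s1] iT[OF s00] iT[OF s11] by simp
  also have "\<dots> = a1 * (c * (\<integral>p. T f p \<partial>lborel)) + (a2 * (c * (\<integral>p. T (pd 0 f) p \<partial>lborel)) + (a3 * (c * (\<integral>p. T (pd 1 f) p \<partial>lborel))
        + (a4 * (c * (\<integral>p. T (pd 0 (pd 0 f)) p \<partial>lborel)) + a5 * (c * (\<integral>p. T (pd 1 (pd 1 f)) p \<partial>lborel)))))"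
    by (simp add: algebra_simps)
  also have "\<dots> = a1 * f x + (a2 * pd 0 f x + (a3 * pd 1 f x + (a4 * pd 0 (pd 0 f) x + a5 * pd 1 (pd 1 f) x)))"
    unfolding c_def T_def inversion_ep[OF f] inversion_ep[OF s0] inversion_ep[OF s1] inversion_ep[OF s00] inversion_ep[OF s11] ..
  also have "\<dots> = (1/2) * (- pd 0 (pd 0 f) x + pd 1 (pd 1 f) x
      - 2 * \<i> * complex_of_real E * (complex_of_real (snd x) * pd 0 f x + complex_of_real (fst x) * pd 1 f x)
      + complex_of_real (E^2 * ((snd x)\<^sup>2 - (fst x)\<^sup>2)) * f x)"
    unfolding a1_def a2_def a3_def a4_def a5_def by (simp add: algebra_simps) (simp add: field_simps)
  finally show ?thesis .
qed

lemma main_left: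
  assumes f: "schwartz f" and E: "E \<noteq> 0" and th: "\<theta> = 2 / E"
  shows "Dsq E f = (\<lambda>x. complex_of_real (E ^ 2) * star_poly_left \<theta> Hpoly f x)"
proof
  fix x show "Dsq E f x = complex_of_real (E ^ 2) * star_poly_left \<theta> Hpoly f x"
    unfolding Dsq_formula[OF f, of E x] star_formula[OF f E th, of x] ..
qed

lemma Ex_neg: "Ex (- E) \<mu> p = - Ex E \<mu> p"
  by (simp add: Ex_def sum_negf)

lemma Dtop_Dop: "Dtop E \<mu> g = Dop (- E) \<mu> g"
  by (rule ext) (simp add: Dtop_def Dop_def Ex_neg)

lemma Dtsq_Dsq: "Dtsq E f = Dsq (- E) f"
  by (rule ext) (simp add: Dtsq_def Dsq_def Dtop_Dop)

lemma star_right_left: "star_poly_right \<theta> f P x = star_poly_left (- \<theta>) P f x"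
proof -
  have "x - shiftv \<theta> k = x + shiftv (- \<theta>) k" for k by (simp add: shiftv_eq)
  then show ?thesis unfolding star_poly_right_def star_poly_left_def by (simp only:)
qed

theorem lemma1:
  fixes E \<theta> :: real and f :: "real \<times> real \<Rightarrow> complex"
  assumes "E \<noteq> 0" and "\<theta> = 2 / E" and "schwartz f"
  shows "Dsq E f = (\<lambda>x. complex_of_real (E ^ 2) * star_poly_left \<theta> Hpoly f x)
       \<and> Dtsq E f = (\<lambda>x. complex_of_real (E ^ 2) * star_poly_right \<theta> f Hpoly x)"
proof
  show "Dsq E f = (\<lambda>x. complex_of_real (E ^ 2) * star_poly_left \<theta> Hpoly f x)"
    by (rule main_left[OF assms(3,1,2)])
  have "- E \<noteq> 0" using assms(1) by simp
  moreover have "- \<theta> = 2 / (- E)" using assms(2) by simp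
  ultimately have "Dsq (- E) f = (\<lambda>x. complex_of_real ((- E) ^ 2) * star_poly_left (- \<theta>) Hpoly f x)"
    by (rule main_left[OF assms(3)])
  then show "Dtsq E f = (\<lambda>x. complex_of_real (E ^ 2) * star_poly_right \<theta> f Hpoly x)"
    unfolding Dtsq_Dsq star_right_left by simp
qed


end
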